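(* Let $\alpha,\beta\in\mathbb{R}$ with $\beta-\alpha-2\neq 0$, and set $\mathbf C_{\alpha,\beta}=\frac{(\beta-3)(2\alpha-\beta+1)}{4}$. For every $f\in C_0^\infty((0,\infty))$ (complex-valued), with $f^\#(r)=f''(r)+\frac{\beta-2}{r}f'(r)+\frac{(\beta-3)^2}{4r^2}f(r)$, there holds \[ \mathbf C_{\alpha,\beta}^2\left\|\frac{f}{r^2}\right\|_{L^2_\beta}^2=\left\|\mathfrak L_\alpha f\right\|_{L^2_\beta}^2-\left(1+\frac{2\mathbf C_{\alpha,\beta}}{(\beta-\alpha-2)^2}\right)\left\|\mathfrak L_\alpha f+\mathbf C_{\alpha,\beta}\frac{f}{r^2}\right\|_{L^2_\beta}^2+\frac{2\mathbf C_{\alpha,\beta}}{(\beta-\alpha-2)^2}\left\|f^\#\right\|_{L^2_\beta}^2 . \]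
   Context: For $\beta\in\mathbb{R}$, $L^2_\beta$ denotes the weighted space on $(0,\infty)$ with norm $\|g\|_{L^2_\beta}^2=\int_0^\infty |g(r)|^2 r^\beta\,dr$. For $\alpha\in\mathbb{R}$, $\mathfrak L_\alpha$ is the operator $\mathfrak L_\alpha f(r)=f''(r)+\frac{\alpha}{r}f'(r)$. Expressions such as $f/r^2$ denote the function $r\mapsto f(r)/r^2$. *)

theory Defs
  imports "HOL-Analysis.Analysis"
begin

definition vd :: "(real \<Rightarrow> complex) \<Rightarrow> real \<Rightarrow> complex" where
  "vd g x = vector_derivative g (at x)"

definition smooth_compact_pos :: "(real \<Rightarrow> complex) \<Rightarrow> bool" where
  "smooth_compact_pos f \<longleftrightarrow>
     (\<forall>n. \<forall>r::real. r > 0 \<longrightarrow> ((vd ^^ n) f) differentiable (at r)) \<and>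
     (\<exists>a b. 0 < a \<and> a \<le> b \<and> (\<forall>r. r \<notin> {a..b} \<longrightarrow> f r = 0))"

definition wnorm2 :: "real \<Rightarrow> (real \<Rightarrow> complex) \<Rightarrow> real" where
  "wnorm2 \<beta> g = integral {0<..} (\<lambda>r. (cmod (g r))\<^sup>2 * r powr \<beta>)"

definition Lop :: "real \<Rightarrow> (real \<Rightarrow> complex) \<Rightarrow> real \<Rightarrow> complex" where
  "Lop \<alpha> f r = vd (vd f) r + complex_of_real (\<alpha> / r) * vd f r"

definition Cab :: "real \<Rightarrow> real \<Rightarrow> real" where
  "Cab \<alpha> \<beta> = (\<beta> - 3) * (2 * \<alpha> - \<beta> + 1) / 4"

definition fsharp :: "real \<Rightarrow> (real \<Rightarrow> complex) \<Rightarrow> real \<Rightarrow> complex" where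
  "fsharp \<beta> f r = vd (vd f) r + complex_of_real ((\<beta> - 2) / r) * vd f r
                   + complex_of_real ((\<beta> - 3)\<^sup>2 / (4 * r\<^sup>2)) * f r"

end

theory Submission
  imports Defs
begin

lemma cmod_comb:
  "(cmod (complex_of_real a * w + complex_of_real b * v + complex_of_real c * u))\<^sup>2
   = a\<^sup>2*(w\<bullet>w) + b\<^sup>2*(v\<bullet>v) + c\<^sup>2*(u\<bullet>u) + 2*a*b*(w\<bullet>v) + 2*a*c*(w\<bullet>u) + 2*b*c*(v\<bullet>u)"
  by (simp only: cmod_power2) (simp add: inner_complex_def power2_eq_square algebra_simps)

lemma restrict_int:
  fixes h :: "real \<Rightarrow> real"
  assumes "0 < c" "continuous_on {c..d} h" "\<forall>r>0. r \<notin> {c..d} \<longrightarrow> h r = 0"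
  shows "(h has_integral integral {c..d} h) {0<..}"
proof -
  have "(h has_integral integral {c..d} h) {c..d}"
    using integrable_continuous_interval[of c d h] assms(2) by (simp add: has_integral_integral)
  hence "((\<lambda>x. if x\<in>{c..d} then h x else 0) has_integral integral {c..d} h) UNIV"
    by (subst has_integral_restrict_UNIV)
  moreover have "(\<lambda>x. if x\<in>{c..d} then h x else 0) = (\<lambda>x. if x \<in> {0<..} then h x else 0)"
    using assms by (auto simp: fun_eq_iff)
  ultimately show ?thesis by (metis has_integral_restrict_UNIV)
qed

lemma hvd_inner:
  fixes f g :: "real \<Rightarrow> complex"
  assumes "(f has_vector_derivative f') (at x)" "(g has_vector_derivative g') (at x)"
  shows "((\<lambda>t. f t \<bullet> g t) has_real_derivative (f x \<bullet> g' + f' \<bullet> g x)) (at x)"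
  using has_derivative_inner[OF assms[unfolded has_vector_derivative_def]]
  unfolding has_field_derivative_def
  by (rule has_derivative_eq_rhs) (auto simp: fun_eq_iff inner_scaleR_left inner_scaleR_right algebra_simps)

lemma vd_zero:
  assumes "open S" "\<forall>y\<in>S. g y = 0" "x \<in> S"
  shows "vd g x = 0"
proof -
  have "((\<lambda>_. 0::complex) has_vector_derivative 0) (at x)" by simp
  hence "(g has_vector_derivative 0) (at x)"
    by (rule has_vector_derivative_transform_within_open[OF _ assms(1,3)]) (use assms(2) in auto)
  thus ?thesis unfolding vd_def by (rule vector_derivative_at)
qed

lemma ibp:
  fixes p p' :: "real \<Rightarrow> real"
  assumes "0 < c" "c \<le> d" "\<forall>x\<in>{c..d}. (p has_real_derivative p' x) (at x)"
    "continuous_on {c..d} p'" "p c = 0" "p d = 0"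
  shows "integral {c..d} (\<lambda>x. p' x * x powr \<gamma>) = - \<gamma> * integral {c..d} (\<lambda>x. p x * x powr (\<gamma>-1))"
proof -
  have cp: "continuous_on {c..d} p"
    using assms(3) by (meson DERIV_continuous continuous_at_imp_continuous_on)
  have pos: "\<forall>x\<in>{c..d}. 0 < x" using assms(1) by auto
  have c1: "continuous_on {c..d} (\<lambda>x. p' x * x powr \<gamma>)"
    using pos by (intro continuous_intros assms(4)) auto
  have c2: "continuous_on {c..d} (\<lambda>x. p x * x powr (\<gamma>-1))"
    using pos by (intro continuous_intros cp) auto
  have "((\<lambda>x. p' x * x powr \<gamma> + p x * (\<gamma> * x powr (\<gamma>-1))) has_integral
        (p d * d powr \<gamma> - p c * c powr \<gamma>)) {c..d}"
  proof (rule fundamental_theorem_of_calculus[OF assms(2)])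
    fix x assume x: "x \<in> {c..d}"
    have "((\<lambda>x. p x * x powr \<gamma>) has_real_derivative (p' x * x powr \<gamma> + p x * (\<gamma> * x powr (\<gamma>-1)))) (at x)"
      using assms(3) x pos has_real_derivative_powr[of x \<gamma>] by (auto intro!: derivative_eq_intros)
    thus "((\<lambda>x. p x * x powr \<gamma>) has_vector_derivative (p' x * x powr \<gamma> + p x * (\<gamma> * x powr (\<gamma>-1)))) (at x within {c..d})"
      by (simp add: has_real_derivative_iff_has_vector_derivative has_vector_derivative_at_within)
  qed
  hence "integral {c..d} (\<lambda>x. p' x * x powr \<gamma> + \<gamma> * (p x * x powr (\<gamma>-1))) = 0"
    using assms(5,6) by (simp add: integral_unique algebra_simps)
  moreover have "integral {c..d} (\<lambda>x. p' x * x powr \<gamma> + \<gamma> * (p x * x powr (\<gamma>-1)))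
     = integral {c..d} (\<lambda>x. p' x * x powr \<gamma>) + \<gamma> * integral {c..d} (\<lambda>x. p x * x powr (\<gamma>-1))"
    using integral_add[OF integrable_continuous_interval[OF c1] integrable_on_mult_right[OF integrable_continuous_interval[OF c2]], of \<gamma>]
    by simp
  ultimately show ?thesis by linarith
qed

lemma wcomb:
  fixes u v w :: "real \<Rightarrow> complex" and \<phi> :: "real \<Rightarrow> complex"
  assumes c0: "0 < c" and cu: "continuous_on {c..d} u" and cv: "continuous_on {c..d} v"
    and cw: "continuous_on {c..d} w"
    and van: "\<forall>r>0. r \<notin> {c..d} \<longrightarrow> u r = 0 \<and> v r = 0 \<and> w r = 0"
    and phi: "\<forall>r>0. \<phi> r = complex_of_real a * w r + complex_of_real (b/r) * v r + complex_of_real (e/r\<^sup>2) * u r"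
  shows "wnorm2 \<beta> \<phi> =
     a\<^sup>2 * integral {c..d} (\<lambda>r. (w r \<bullet> w r) * r powr \<beta>)
   + b\<^sup>2 * integral {c..d} (\<lambda>r. (v r \<bullet> v r) * r powr (\<beta>-2))
   + e\<^sup>2 * integral {c..d} (\<lambda>r. (u r \<bullet> u r) * r powr (\<beta>-4))
   + 2*a*b * integral {c..d} (\<lambda>r. (w r \<bullet> v r) * r powr (\<beta>-1))
   + 2*a*e * integral {c..d} (\<lambda>r. (w r \<bullet> u r) * r powr (\<beta>-2))
   + 2*b*e * integral {c..d} (\<lambda>r. (v r \<bullet> u r) * r powr (\<beta>-3))"
proof -
  have pos: "\<forall>x\<in>{c..d}. 0 < x" using c0 by auto
  have "\<And>k. continuous_on {c..d} (\<lambda>r. r powr (\<beta> - k))"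
    using pos by (intro continuous_intros) auto
  note ri = restrict_int[OF c0]
  have hH: "((\<lambda>r. (w r \<bullet> w r) * r powr \<beta>) has_integral integral {c..d} (\<lambda>r. (w r \<bullet> w r) * r powr \<beta>)) {0<..}"
    by (rule ri) (use van pos in \<open>auto intro!: continuous_intros cw\<close>)
  have hB: "((\<lambda>r. (v r \<bullet> v r) * r powr (\<beta>-2)) has_integral integral {c..d} (\<lambda>r. (v r \<bullet> v r) * r powr (\<beta>-2))) {0<..}"
    by (rule ri) (use van pos in \<open>auto intro!: continuous_intros cv\<close>)
  have hA: "((\<lambda>r. (u r \<bullet> u r) * r powr (\<beta>-4)) has_integral integral {c..d} (\<lambda>r. (u r \<bullet> u r) * r powr (\<beta>-4))) {0<..}"
    by (rule ri) (use van pos in \<open>auto intro!: continuous_intros cu\<close>)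
  have hG: "((\<lambda>r. (w r \<bullet> v r) * r powr (\<beta>-1)) has_integral integral {c..d} (\<lambda>r. (w r \<bullet> v r) * r powr (\<beta>-1))) {0<..}"
    by (rule ri) (use van pos in \<open>auto intro!: continuous_intros cv cw\<close>)
  have hF: "((\<lambda>r. (w r \<bullet> u r) * r powr (\<beta>-2)) has_integral integral {c..d} (\<lambda>r. (w r \<bullet> u r) * r powr (\<beta>-2))) {0<..}"
    by (rule ri) (use van pos in \<open>auto intro!: continuous_intros cu cw\<close>)
  have hE: "((\<lambda>r. (v r \<bullet> u r) * r powr (\<beta>-3)) has_integral integral {c..d} (\<lambda>r. (v r \<bullet> u r) * r powr (\<beta>-3))) {0<..}"
    by (rule ri) (use van pos in \<open>auto intro!: continuous_intros cu cv\<close>)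
  have tot: "((\<lambda>r. a\<^sup>2 * ((w r \<bullet> w r) * r powr \<beta>) + b\<^sup>2 * ((v r \<bullet> v r) * r powr (\<beta>-2))
     + e\<^sup>2 * ((u r \<bullet> u r) * r powr (\<beta>-4)) + 2*a*b * ((w r \<bullet> v r) * r powr (\<beta>-1))
     + 2*a*e * ((w r \<bullet> u r) * r powr (\<beta>-2)) + 2*b*e * ((v r \<bullet> u r) * r powr (\<beta>-3)))
     has_integral (a\<^sup>2 * integral {c..d} (\<lambda>r. (w r \<bullet> w r) * r powr \<beta>)
   + b\<^sup>2 * integral {c..d} (\<lambda>r. (v r \<bullet> v r) * r powr (\<beta>-2))
   + e\<^sup>2 * integral {c..d} (\<lambda>r. (u r \<bullet> u r) * r powr (\<beta>-4))
   + 2*a*b * integral {c..d} (\<lambda>r. (w r \<bullet> v r) * r powr (\<beta>-1))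
   + 2*a*e * integral {c..d} (\<lambda>r. (w r \<bullet> u r) * r powr (\<beta>-2))
   + 2*b*e * integral {c..d} (\<lambda>r. (v r \<bullet> u r) * r powr (\<beta>-3)))) {0<..}"
    (is "(?g has_integral ?I) _")
    by (intro has_integral_add has_integral_mult_right hH hB hA hG hF hE)
  have eq: "(cmod (\<phi> r))\<^sup>2 * r powr \<beta> = a\<^sup>2 * ((w r \<bullet> w r) * r powr \<beta>) + b\<^sup>2 * ((v r \<bullet> v r) * r powr (\<beta>-2))
     + e\<^sup>2 * ((u r \<bullet> u r) * r powr (\<beta>-4)) + 2*a*b * ((w r \<bullet> v r) * r powr (\<beta>-1))
     + 2*a*e * ((w r \<bullet> u r) * r powr (\<beta>-2)) + 2*b*e * ((v r \<bullet> u r) * r powr (\<beta>-3))"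
    if r: "r \<in> {0<..}" for r
  proof -
    from r have r0: "r > 0" by simp
    have p: "r powr (\<beta> - k) = r powr \<beta> / r ^ n" if "k = real n" for k n
      using r0 that by (simp add: powr_diff powr_realpow)
    have p1: "r powr (\<beta> - 1) = r powr \<beta> / r ^ 1" by (rule p) simp
    have p2: "r powr (\<beta> - 2) = r powr \<beta> / r ^ 2" by (rule p) simp
    have p3: "r powr (\<beta> - 3) = r powr \<beta> / r ^ 3" by (rule p) simp
    have p4: "r powr (\<beta> - 4) = r powr \<beta> / r ^ 4" by (rule p) simp
    show ?thesis using r0 unfolding phi[rule_format, OF r0] cmod_comb p1 p2 p3 p4
      by (simp add: field_simps power2_eq_square eval_nat_numeral)
  qed
  have "((\<lambda>r. (cmod (\<phi> r))\<^sup>2 * r powr \<beta>) has_integral ?I) {0<..}"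
    by (rule has_integral_cong[THEN iffD1, OF _ tot]) (use eq in auto)
  thus ?thesis unfolding wnorm2_def by (rule integral_unique)
qed

lemma aux:
  fixes DD X Lx Lc Sx cc :: real
  assumes "DD \<noteq> 0" "DD*X = DD*Lx - (DD+2*cc)*Lc + 2*cc*Sx"
  shows "X = Lx - (1 + 2*cc/DD)*Lc + 2*cc/DD*Sx"
proof -
  have "Lx - (1 + 2*cc/DD)*Lc + 2*cc/DD*Sx = (DD*Lx - (DD+2*cc)*Lc + 2*cc*Sx)/DD"
    using assms(1) by (simp add: field_simps)
  also have "\<dots> = X" using assms by (metis nonzero_mult_div_cancel_left)
  finally show ?thesis by simp
qed

theorem theorem1p2:
  fixes \<alpha> \<beta> :: real and f :: "real \<Rightarrow> complex"
  assumes "\<beta> - \<alpha> - 2 \<noteq> 0"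
    and "smooth_compact_pos f"
  shows "(Cab \<alpha> \<beta>)\<^sup>2 * wnorm2 \<beta> (\<lambda>r. f r / complex_of_real (r\<^sup>2))
     = wnorm2 \<beta> (Lop \<alpha> f)
       - (1 + 2 * Cab \<alpha> \<beta> / (\<beta> - \<alpha> - 2)\<^sup>2)
           * wnorm2 \<beta> (\<lambda>r. Lop \<alpha> f r + complex_of_real (Cab \<alpha> \<beta>) * (f r / complex_of_real (r\<^sup>2)))
       + 2 * Cab \<alpha> \<beta> / (\<beta> - \<alpha> - 2)\<^sup>2 * wnorm2 \<beta> (fsharp \<beta> f)"
proof -
  define u where "u = f"
  define v where "v = vd f"
  define w where "w = vd (vd f)"
  from assms(2) have sm: "\<And>n r. r > 0 \<Longrightarrow> ((vd ^^ n) f) differentiable (at r)"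
    and "\<exists>a b. 0 < a \<and> a \<le> b \<and> (\<forall>r. r \<notin> {a..b} \<longrightarrow> f r = 0)"
    unfolding smooth_compact_pos_def by auto
  then obtain a b where ab: "0 < a" "a \<le> b" "\<And>r. r \<notin> {a..b} \<Longrightarrow> f r = 0" by blast
  have du: "r > 0 \<Longrightarrow> u differentiable (at r)" for r using sm[of r 0] by (simp add: u_def)
  have dv: "r > 0 \<Longrightarrow> v differentiable (at r)" for r using sm[of r 1] by (simp add: v_def)
  have dw: "r > 0 \<Longrightarrow> w differentiable (at r)" for r using sm[of r 2] by (simp add: w_def numeral_2_eq_2)
  have hu: "r > 0 \<Longrightarrow> (u has_vector_derivative v r) (at r)" for r
    using vector_derivative_works[THEN iffD1, OF du[of r]] by (simp add: v_def vd_def u_def)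
  have hv: "r > 0 \<Longrightarrow> (v has_vector_derivative w r) (at r)" for r
    using vector_derivative_works[THEN iffD1, OF dv[of r]] by (simp add: v_def vd_def w_def)
  define S where "S = {0<..<a} \<union> {b<..}"
  have oS: "open S" unfolding S_def by auto
  have uS: "\<forall>y\<in>S. u y = 0" using ab unfolding S_def u_def by auto
  have vS: "\<forall>y\<in>S. v y = 0" using vd_zero[OF oS uS] unfolding v_def u_def by auto
  have wS: "\<forall>y\<in>S. w y = 0" using vd_zero[OF oS vS] unfolding v_def w_def by auto
  define c where "c = a/2"
  define d where "d = b+1"
  have c0: "0 < c" "c \<le> d" using ab unfolding c_def d_def by auto
  have cS: "c \<in> S" and dS: "d \<in> S" using ab unfolding c_def d_def S_def by auto
  have outS: "\<And>r. r > 0 \<Longrightarrow> r \<notin> {c..d} \<Longrightarrow> r \<in> S" using ab unfolding c_def d_def S_def by auto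
  have van: "\<forall>r>0. r \<notin> {c..d} \<longrightarrow> u r = 0 \<and> v r = 0 \<and> w r = 0"
    using outS uS vS wS by blast
  have pos: "\<forall>x\<in>{c..d}. 0 < x" using c0 by auto
  have cu: "continuous_on {c..d} u" using pos du
    by (meson continuous_at_imp_continuous_on differentiable_imp_continuous_within)
  have cv: "continuous_on {c..d} v" using pos dv
    by (meson continuous_at_imp_continuous_on differentiable_imp_continuous_within)
  have cw: "continuous_on {c..d} w" using pos dw
    by (meson continuous_at_imp_continuous_on differentiable_imp_continuous_within)
  define IA where "IA = integral {c..d} (\<lambda>r. (u r \<bullet> u r) * r powr (\<beta>-4))"
  define IB where "IB = integral {c..d} (\<lambda>r. (v r \<bullet> v r) * r powr (\<beta>-2))"
  define IH where "IH = integral {c..d} (\<lambda>r. (w r \<bullet> w r) * r powr \<beta>)"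
  define IE where "IE = integral {c..d} (\<lambda>r. (v r \<bullet> u r) * r powr (\<beta>-3))"
  define IF where "IF = integral {c..d} (\<lambda>r. (w r \<bullet> u r) * r powr (\<beta>-2))"
  define IG where "IG = integral {c..d} (\<lambda>r. (w r \<bullet> v r) * r powr (\<beta>-1))"
  note wc = wcomb[OF c0(1) cu cv cw van, of _ _ _ _ \<beta>, folded IA_def IB_def IH_def IE_def IF_def IG_def]

  have r1: "IE = - (\<beta>-3)/2 * IA"
  proof -
    have "integral {c..d} (\<lambda>x. (2 * (v x \<bullet> u x)) * x powr (\<beta>-3)) = - (\<beta>-3) * integral {c..d} (\<lambda>x. (u x \<bullet> u x) * x powr (\<beta>-3-1))"
    proof (rule ibp[OF c0])
      show "\<forall>x\<in>{c..d}. ((\<lambda>x. u x \<bullet> u x) has_real_derivative 2 * (v x \<bullet> u x)) (at x)"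
        using pos hu hvd_inner[OF hu hu] by (auto simp: inner_commute)
      show "continuous_on {c..d} (\<lambda>x. 2 * (v x \<bullet> u x))" by (intro continuous_intros cu cv)
    qed (use cS dS uS in auto)
    thus ?thesis unfolding IE_def IA_def by (simp add: mult.assoc)
  qed
  have r2: "IG = - (\<beta>-1)/2 * IB"
  proof -
    have "integral {c..d} (\<lambda>x. (2 * (w x \<bullet> v x)) * x powr (\<beta>-1)) = - (\<beta>-1) * integral {c..d} (\<lambda>x. (v x \<bullet> v x) * x powr (\<beta>-1-1))"
    proof (rule ibp[OF c0])
      show "\<forall>x\<in>{c..d}. ((\<lambda>x. v x \<bullet> v x) has_real_derivative 2 * (w x \<bullet> v x)) (at x)"
        using pos hv hvd_inner[OF hv hv] by (auto simp: inner_commute)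
      show "continuous_on {c..d} (\<lambda>x. 2 * (w x \<bullet> v x))" by (intro continuous_intros cw cv)
    qed (use cS dS vS in auto)
    thus ?thesis unfolding IG_def IB_def by (simp add: mult.assoc)
  qed
  have r3: "IF + IB = - (\<beta>-2) * IE"
  proof -
    have "integral {c..d} (\<lambda>x. (w x \<bullet> u x + v x \<bullet> v x) * x powr (\<beta>-2)) = - (\<beta>-2) * integral {c..d} (\<lambda>x. (v x \<bullet> u x) * x powr (\<beta>-2-1))"
    proof (rule ibp[OF c0])
      show "\<forall>x\<in>{c..d}. ((\<lambda>x. v x \<bullet> u x) has_real_derivative (w x \<bullet> u x + v x \<bullet> v x)) (at x)"
        using pos hv hu hvd_inner[OF hv hu] by (auto simp: inner_commute add.commute)
      show "continuous_on {c..d} (\<lambda>x. w x \<bullet> u x + v x \<bullet> v x)" by (intro continuous_intros cw cv cu)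
    qed (use cS dS vS in auto)
    moreover have "integral {c..d} (\<lambda>x. (w x \<bullet> u x + v x \<bullet> v x) * x powr (\<beta>-2)) = IF + IB"
      unfolding IF_def IB_def distrib_right
      by (rule integral_add) (use pos in \<open>auto intro!: integrable_continuous_interval continuous_intros cu cv cw\<close>)
    ultimately show ?thesis unfolding IE_def by simp
  qed
  have eg: "wnorm2 \<beta> (\<lambda>r. f r / complex_of_real (r\<^sup>2)) = IA"
    using wc[of "\<lambda>r. f r / complex_of_real (r\<^sup>2)" 0 0 1] by (simp add: u_def)
  have eL: "wnorm2 \<beta> (Lop \<alpha> f) = IH + \<alpha>\<^sup>2 * IB + 2*\<alpha>*IG"
    using wc[of "Lop \<alpha> f" 1 \<alpha> 0] by (simp add: Lop_def u_def v_def w_def)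
  have eLC: "wnorm2 \<beta> (\<lambda>r. Lop \<alpha> f r + complex_of_real (Cab \<alpha> \<beta>) * (f r / complex_of_real (r\<^sup>2)))
     = IH + \<alpha>\<^sup>2 * IB + (Cab \<alpha> \<beta>)\<^sup>2 * IA + 2*\<alpha>*IG + 2*(Cab \<alpha> \<beta>)*IF + 2*\<alpha>*(Cab \<alpha> \<beta>)*IE"
    using wc[of _ 1 \<alpha> "Cab \<alpha> \<beta>"] by (simp add: Lop_def u_def v_def w_def)
  have eS: "wnorm2 \<beta> (fsharp \<beta> f) = IH + (\<beta>-2)\<^sup>2 * IB + ((\<beta>-3)\<^sup>2/4)\<^sup>2 * IA + 2*(\<beta>-2)*IG
       + 2*((\<beta>-3)\<^sup>2/4)*IF + 2*(\<beta>-2)*((\<beta>-3)\<^sup>2/4)*IE"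
    using wc[of _ 1 "\<beta>-2" "(\<beta>-3)\<^sup>2/4"] by (simp add: fsharp_def u_def v_def w_def)
  have D: "(\<beta> - \<alpha> - 2)\<^sup>2 \<noteq> 0" using assms(1) by simp
  have IF0: "IF = - (\<beta>-2) * IE - IB" using r3 by simp
  have IF: "IF = (\<beta>-2)*(\<beta>-3)/2 * IA - IB" unfolding IF0 r1 by (simp add: field_simps)
  define C where "C = Cab \<alpha> \<beta>"
  define k where "k = (\<beta>-3)\<^sup>2/4"
  define DD where "DD = (\<beta> - \<alpha> - 2)\<^sup>2"
  have hC: "4*C = (\<beta>-3)*(2*\<alpha>-\<beta>+1)" unfolding C_def Cab_def by simp
  have hk: "4*k = (\<beta>-3)*(\<beta>-3)" unfolding k_def by (simp add: power2_eq_square)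
  have hD: "DD = (\<beta> - \<alpha> - 2)*(\<beta> - \<alpha> - 2)" unfolding DD_def by (simp add: power2_eq_square)
  have D': "DD \<noteq> 0" using D unfolding DD_def .
  show ?thesis unfolding eg eL eLC eS r1 r2 IF unfolding C_def[symmetric] k_def[symmetric] DD_def[symmetric]
    apply (rule aux[OF D'])
    using hC hk hD by algebra
qed

end
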